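(* Let $(\mathcal L,\bar{\mathcal L})$ be a solution of the dispersionless Toda lattice hierarchy. Put $k=\mathcal B_1=p+u_1(t,\bar t,s)$ and regard $\mathcal L$ as a Laurent series in $k$ (substituting $p=k-u_1$), with $\bar t$ treated as parameters and with $t_1$ playing the role of the variable $x$. Set $\mathcal P=p=k-u_1(t,\bar t,s)$. Then, with all derivatives in $t_n$ and $s$ taken at fixed $k$ and with the bracket $\{F,G\}=\frac{\partial F}{\partial k}\frac{\partial G}{\partial t_1}-\frac{\partial F}{\partial t_1}\frac{\partial G}{\partial k}$, one has for all $n\ge1$: \[ \frac{\partial\mathcal L}{\partial t_n}=\{\mathcal B_n,\mathcal L\},\qquad \frac{\partial\mathcal L}{\partial s}\,\mathcal P=\{\mathcal P,\mathcal L\},\qquad -\frac{\partial\mathcal B_n}{\partial s}\,\mathcal P=-\frac{\partial\mathcal P}{\partial t_n}-\{\mathcal P,\mathcal B_n\}, \] where $\mathcal B_n=(\mathcal L^n)_{\ge0}$ (the polynomial part in $k$, which coincides with the polynomial part in $p$). That is, $(\mathcal L,\mathcal P)$ solves the ($\mathcal L,\mathcal P$-part of the) dispersionless $1$-modified KP hierarchy.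
   Context: The dispersionless Toda lattice hierarchy: variables $t=(t_1,t_2,\dots)$, $\bar t=(\bar t_1,\bar t_2,\dots)$, $s$; unknowns are Laurent series in $p$: $\mathcal L=p+\sum_{n\ge0}u_{n+1}(t,\bar t,s)p^{-n}$ and $\bar{\mathcal L}$ with $\bar{\mathcal L}^{-1}=\bar u_0(t,\bar t,s)p^{-1}+\sum_{n\ge0}\bar u_{n+1}(t,\bar t,s)p^n$. With $\{A,B\}_{\mathrm{Toda}}=p\frac{\partial A}{\partial p}\frac{\partial B}{\partial s}-p\frac{\partial A}{\partial s}\frac{\partial B}{\partial p}$, $\mathcal B_n=(\mathcal L^n)_{\ge0}$ and $\bar{\mathcal B}_n=(\bar{\mathcal L}^{-n})_{<0}$ (projections to nonnegative/negative powers of $p$), the equations are $\partial\mathcal L/\partial t_n=\{\mathcal B_n,\mathcal L\}_{\mathrm{Toda}}$, $\partial\mathcal L/\partial\bar t_n=\{\bar{\mathcal B}_n,\mathcal L\}_{\mathrm{Toda}}$, $\partial\bar{\mathcal L}/\partial t_n=\{\mathcal B_n,\bar{\mathcal L}\}_{\mathrm{Toda}}$, $\partial\bar{\mathcal L}/\partial\bar t_n=\{\bar{\mathcal B}_n,\bar{\mathcal L}\}_{\mathrm{Toda}}$ for $n\ge1$ (derivatives at fixed $p$). *)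

theory Defs
  imports "HOL-Analysis.Analysis"
begin

text \<open>Points of the time space: (t, tbar, s), with t_n = t n and tbar_n = tb n for n \<ge> 1
  (the components t 0, tb 0 are unused spectator parameters).\<close>
type_synonym pt = "(nat \<Rightarrow> real) \<times> (nat \<Rightarrow> real) \<times> real"
type_synonym coef = "pt \<Rightarrow> real"
text \<open>A formal Laurent series in one variable (p or k): coefficient of the j-th power.\<close>
type_synonym lser = "int \<Rightarrow> coef"

definition dTc :: "nat \<Rightarrow> coef \<Rightarrow> coef" where
  "dTc n f = (\<lambda>(t, tb, s). deriv (\<lambda>y. f (t(n := y), tb, s)) (t n))"

definition dTbc :: "nat \<Rightarrow> coef \<Rightarrow> coef" where
  "dTbc n f = (\<lambda>(t, tb, s). deriv (\<lambda>y. f (t, tb(n := y), s)) (tb n))"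

definition dSc :: "coef \<Rightarrow> coef" where
  "dSc f = (\<lambda>(t, tb, s). deriv (\<lambda>y. f (t, tb, y)) s)"

definition sep_diff :: "coef \<Rightarrow> bool" where
  "sep_diff f \<longleftrightarrow>
     (\<forall>t tb s. \<forall>n\<ge>1. (\<lambda>y. f (t(n := y), tb, s)) differentiable (at (t n))
                    \<and> (\<lambda>y. f (t, tb(n := y), s)) differentiable (at (tb n)))
   \<and> (\<forall>t tb s. (\<lambda>y. f (t, tb, y)) differentiable (at s))"

definition dT :: "nat \<Rightarrow> lser \<Rightarrow> lser" where "dT n F = (\<lambda>m. dTc n (F m))"
definition dTb :: "nat \<Rightarrow> lser \<Rightarrow> lser" where "dTb n F = (\<lambda>m. dTbc n (F m))"
definition dS :: "lser \<Rightarrow> lser" where "dS F = (\<lambda>m. dSc (F m))"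

text \<open>Product (Cauchy product; the sum is finite for all series used here, since
  they are bounded above or bounded below in degree).\<close>
definition lmul :: "lser \<Rightarrow> lser \<Rightarrow> lser" where
  "lmul F G = (\<lambda>m x. (\<Sum>i | F i x * G (m - i) x \<noteq> 0. F i x * G (m - i) x))"

definition lone :: lser where "lone = (\<lambda>m x. if m = 0 then 1 else 0)"

primrec lpow :: "lser \<Rightarrow> nat \<Rightarrow> lser" where
  "lpow F 0 = lone"
| "lpow F (Suc n) = lmul F (lpow F n)"

definition lsub :: "lser \<Rightarrow> lser \<Rightarrow> lser" where "lsub F G = (\<lambda>m x. F m x - G m x)"
definition lneg :: "lser \<Rightarrow> lser" where "lneg F = (\<lambda>m x. - F m x)"

definition lshift :: "lser \<Rightarrow> lser" where "lshift F = (\<lambda>m. F (m - 1))"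
definition ldv :: "lser \<Rightarrow> lser" where "ldv F = (\<lambda>m x. of_int (m + 1) * F (m + 1) x)"

definition lpos :: "lser \<Rightarrow> lser" where "lpos F = (\<lambda>m. if 0 \<le> m then F m else (\<lambda>_. 0))"
definition lnegpart :: "lser \<Rightarrow> lser" where "lnegpart F = (\<lambda>m. if m < 0 then F m else (\<lambda>_. 0))"

definition todaBr :: "lser \<Rightarrow> lser \<Rightarrow> lser" where
  "todaBr A B = lsub (lshift (lmul (ldv A) (dS B))) (lshift (lmul (dS A) (ldv B)))"

definition Bp :: "lser \<Rightarrow> nat \<Rightarrow> lser" where "Bp L n = lpos (lpow L n)"
definition Bbar :: "lser \<Rightarrow> nat \<Rightarrow> lser" where "Bbar M n = lnegpart (lpow M n)"

text \<open>Re-expansion of a series F(p) = sum_j F_j p^j (bounded above in degree) in k = p + u,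
  i.e. substituting p = k - u and expanding (k - u)^j = sum_i (j gchoose i) (-u)^i k^(j-i).\<close>
definition toK :: "coef \<Rightarrow> lser \<Rightarrow> lser" where
  "toK u F = (\<lambda>m x. (\<Sum>j | m \<le> j \<and> F j x \<noteq> 0.
      F j x * ((of_int j :: real) gchoose nat (j - m)) * (- u x) ^ nat (j - m)))"

text \<open>For L with p-coefficients L j (so u_1 = L 0): L as a series in k.\<close>
definition Lk :: "lser \<Rightarrow> lser" where "Lk L = toK (L 0) L"

definition Pk :: "lser \<Rightarrow> lser" where
  "Pk L = (\<lambda>m x. if m = 1 then 1 else if m = 0 then - L 0 x else 0)"

definition Bk :: "lser \<Rightarrow> nat \<Rightarrow> lser" where "Bk L n = lpos (lpow (Lk L) n)"

definition kBr :: "lser \<Rightarrow> lser \<Rightarrow> lser" where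
  "kBr F G = lsub (lmul (ldv F) (dT 1 G)) (lmul (dT 1 F) (ldv G))"

end

theory Submission
  imports Defs "HOL-Computational_Algebra.Formal_Laurent_Series"
begin

unbundle fps_syntax


definition ub :: "int \<Rightarrow> lser \<Rightarrow> bool" where "ub N F \<longleftrightarrow> (\<forall>m>N. F m = (\<lambda>_. 0))"
definition ubd :: "lser \<Rightarrow> bool" where "ubd F \<longleftrightarrow> (\<exists>N. ub N F)"
definition ladd :: "lser \<Rightarrow> lser \<Rightarrow> lser" where "ladd F G = (\<lambda>m x. F m x + G m x)"
definition cst :: "coef \<Rightarrow> lser" where "cst c = (\<lambda>m. if m = 0 then c else (\<lambda>_. 0))"
definition lzero :: lser where "lzero = (\<lambda>m x. 0)"

lemma lsub_apply[simp]: "lsub F G m x = F m x - G m x" by (simp add: lsub_def)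
lemma ladd_apply[simp]: "ladd F G m x = F m x + G m x" by (simp add: ladd_def)
lemma lneg_apply[simp]: "lneg F m x = - F m x" by (simp add: lneg_def)
lemma lshift_apply[simp]: "lshift F m = F (m - 1)" by (simp add: lshift_def)
lemma ldv_apply[simp]: "ldv F m x = of_int (m + 1) * F (m + 1) x" by (simp add: ldv_def)
lemma lpos_apply[simp]: "lpos F m x = (if 0 \<le> m then F m x else 0)" by (simp add: lpos_def)
lemma lnegpart_apply[simp]: "lnegpart F m x = (if m < 0 then F m x else 0)" by (simp add: lnegpart_def)
lemma cst_apply[simp]: "cst c m x = (if m = 0 then c x else 0)" by (simp add: cst_def)
lemma lone_apply: "lone m x = (if m = 0 then 1 else 0)" by (simp add: lone_def)
lemma lzero_apply: "lzero m x = 0" by (simp add: lzero_def)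

lemma ubD: "ub N F \<Longrightarrow> N < m \<Longrightarrow> F m x = 0"
  by (simp add: ub_def)

lemma ub_mono: "ub N F \<Longrightarrow> N \<le> M \<Longrightarrow> ub M F"
  by (simp add: ub_def)

lemma ubdI: "ub N F \<Longrightarrow> ubd F" by (auto simp: ubd_def)

lemma lmul_bridge:
  assumes "ub N1 F" "ub N2 G"
  shows "lmul F G m x = (\<Sum>i\<in>{m-N2..N1}. F i x * G (m-i) x)"
proof -
  have "lmul F G m x = (\<Sum>i | F i x * G (m-i) x \<noteq> 0. F i x * G (m-i) x)" by (simp add: lmul_def)
  also have "\<dots> = (\<Sum>i\<in>{m-N2..N1}. F i x * G (m-i) x)"
  proof (rule sum.mono_neutral_left)
    show "finite {m-N2..N1}" by simp
    show "{i. F i x * G (m-i) x \<noteq> 0} \<subseteq> {m-N2..N1}"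
    proof
      fix i assume "i \<in> {i. F i x * G (m-i) x \<noteq> 0}"
      then have "F i x \<noteq> 0" "G (m-i) x \<noteq> 0" by auto
      then have "i \<le> N1" "m - i \<le> N2" using assms ubD by (metis not_le)+
      then show "i \<in> {m-N2..N1}" by auto
    qed
    show "\<forall>i\<in>{m-N2..N1} - {i. F i x * G (m-i) x \<noteq> 0}. F i x * G (m-i) x = 0" by auto
  qed
  finally show ?thesis .
qed

lemma ub_lmul: assumes "ub N1 F" "ub N2 G" shows "ub (N1+N2) (lmul F G)"
  unfolding ub_def
proof (intro allI impI ext)
  fix m x assume "N1 + N2 < m"
  then show "lmul F G m x = 0" using lmul_bridge[OF assms] by simp
qed

lemma ub_lone: "ub 0 lone" by (simp add: ub_def lone_def)

lemma ub_lpow: "ub N F \<Longrightarrow> ub (int n * N) (lpow F n)"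
proof (induction n)
  case 0 then show ?case by (simp add: ub_def lone_def)
  case (Suc n)
  then have "ub (N + int n * N) (lpow F (Suc n))" using ub_lmul by simp
  then show ?case by (simp add: algebra_simps)
qed

lemma ub_lsub: "ub N1 F \<Longrightarrow> ub N2 G \<Longrightarrow> ub (max N1 N2) (lsub F G)"
  by (simp add: ub_def lsub_def)
lemma ub_ladd: "ub N1 F \<Longrightarrow> ub N2 G \<Longrightarrow> ub (max N1 N2) (ladd F G)"
  by (simp add: ub_def ladd_def)
lemma ub_lneg: "ub N F \<Longrightarrow> ub N (lneg F)"
  by (simp add: ub_def lneg_def)
lemma ub_lshift: "ub N F \<Longrightarrow> ub (N+1) (lshift F)"
  by (simp add: ub_def lshift_def)
lemma ub_ldv: "ub N F \<Longrightarrow> ub (N-1) (ldv F)"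
  by (simp add: ub_def ldv_def)
lemma ub_lpos: "ub N F \<Longrightarrow> ub N (lpos F)"
  by (simp add: ub_def lpos_def)
lemma ub_lnegpart: "ub (-1) (lnegpart F)"
  by (simp add: ub_def lnegpart_def)
lemma ub_cst: "ub 0 (cst c)"
  by (simp add: ub_def cst_def)
lemma ub_lzero: "ub 0 lzero"
  by (simp add: ub_def lzero_def)

lemma ubd_lmul[simp]: "ubd F \<Longrightarrow> ubd G \<Longrightarrow> ubd (lmul F G)"
  by (meson ubd_def ub_lmul)
lemma ubd_lpow[simp]: "ubd F \<Longrightarrow> ubd (lpow F n)"
  by (meson ubd_def ub_lpow)
lemma ubd_lsub[simp]: "ubd F \<Longrightarrow> ubd G \<Longrightarrow> ubd (lsub F G)"
  by (meson ubd_def ub_lsub)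
lemma ubd_ladd[simp]: "ubd F \<Longrightarrow> ubd G \<Longrightarrow> ubd (ladd F G)"
  by (meson ubd_def ub_ladd)
lemma ubd_lneg[simp]: "ubd F \<Longrightarrow> ubd (lneg F)"
  by (meson ubd_def ub_lneg)
lemma ubd_lshift[simp]: "ubd F \<Longrightarrow> ubd (lshift F)"
  by (meson ubd_def ub_lshift)
lemma ubd_ldv[simp]: "ubd F \<Longrightarrow> ubd (ldv F)"
  by (meson ubd_def ub_ldv)
lemma ubd_lpos[simp]: "ubd F \<Longrightarrow> ubd (lpos F)"
  by (meson ubd_def ub_lpos)
lemma ubd_lnegpart[simp]: "ubd (lnegpart F)"
  by (meson ubd_def ub_lnegpart)
lemma ubd_lone[simp]: "ubd lone"
  by (meson ubd_def ub_lone)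
lemma ubd_cst[simp]: "ubd (cst c)"
  by (meson ubd_def ub_cst)
lemma ubd_lzero[simp]: "ubd lzero"
  by (meson ubd_def ub_lzero)

section \<open>Pointwise view as formal Laurent series in q = 1/p\<close>

definition phi :: "pt \<Rightarrow> lser \<Rightarrow> real fls" where "phi x F = Abs_fls (\<lambda>n. F (-n) x)"

lemma phi_nth_ub: assumes "ub N F" shows "phi x F $$ n = F (-n) x"
proof -
  have "(\<lambda>n. F (-n) x) \<in> {f::int \<Rightarrow> real. \<forall>\<^sub>\<infinity> n::nat. f (- int n) = 0}"
    unfolding MOST_nat
  proof (intro CollectI exI allI impI)
    fix k :: nat assume "nat N < k"
    then have "N < int k" by linarith
    then show "F (- (- int k)) x = 0" using ubD[OF assms] by simp
  qed
  then show ?thesis unfolding phi_def by (simp add: Abs_fls_inverse)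
qed

lemma phi_nth[simp]: "ubd F \<Longrightarrow> phi x F $$ n = F (-n) x"
  using phi_nth_ub ubd_def by blast

lemma fls_mult_nth_bounds:
  fixes f g :: "real fls"
  assumes f0: "\<forall>i<a. f $$ i = 0" and g0: "\<forall>i<b. g $$ i = 0"
  shows "(f*g) $$ n = (\<Sum>i=a..n-b. f $$ i * g $$ (n-i))"
proof (cases "f = 0 \<or> g = 0")
  case True then show ?thesis by auto
next
  case False
  then have "f $$ fls_subdegree f \<noteq> 0" "g $$ fls_subdegree g \<noteq> 0"
    by (auto intro: nth_fls_subdegree_nonzero)
  then have da: "a \<le> fls_subdegree f" and db: "b \<le> fls_subdegree g"
    using f0 g0 by (meson not_le)+
  have "(f*g) $$ n = (\<Sum>i=fls_subdegree f..n-fls_subdegree g. f $$ i * g $$ (n-i))"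
    by (rule fls_times_nth(2))
  also have "\<dots> = (\<Sum>i=a..n-b. f $$ i * g $$ (n-i))"
  proof (rule sum.mono_neutral_left)
    show "{fls_subdegree f..n - fls_subdegree g} \<subseteq> {a..n - b}" using da db by auto
    show "\<forall>i\<in>{a..n - b} - {fls_subdegree f..n - fls_subdegree g}. f $$ i * g $$ (n - i) = 0"
    proof
      fix i assume "i \<in> {a..n - b} - {fls_subdegree f..n - fls_subdegree g}"
      then have "i < fls_subdegree f \<or> n - i < fls_subdegree g" by auto
      then show "f $$ i * g $$ (n - i) = 0" by (auto simp: fls_eq0_below_subdegree)
    qed
  qed simp
  finally show ?thesis .
qed

lemma phi_lmul_ub:
  assumes F: "ub N1 F" and G: "ub N2 G"
  shows "phi x (lmul F G) = phi x F * phi x G"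
proof (rule fls_eqI)
  fix n
  have "phi x (lmul F G) $$ n = lmul F G (-n) x"
    using phi_nth_ub[OF ub_lmul[OF F G]] by simp
  also have "\<dots> = (\<Sum>i\<in>{-n-N2..N1}. F i x * G (-n-i) x)" by (rule lmul_bridge[OF F G])
  also have "\<dots> = (\<Sum>i=-N1..n+N2. F (-i) x * G (-(n-i)) x)"
    by (rule sum.reindex_bij_witness[of _ uminus uminus]) auto
  also have "\<dots> = (\<Sum>i=-N1..n-(-N2). phi x F $$ i * phi x G $$ (n-i))"
    by (simp add: phi_nth_ub[OF F] phi_nth_ub[OF G])
  also have "\<dots> = (phi x F * phi x G) $$ n"
    by (rule fls_mult_nth_bounds[symmetric])
       (auto simp: phi_nth_ub[OF F] phi_nth_ub[OF G] intro!: ubD[OF F] ubD[OF G])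
  finally show "phi x (lmul F G) $$ n = (phi x F * phi x G) $$ n" .
qed

lemma phi_lmul[simp]: "ubd F \<Longrightarrow> ubd G \<Longrightarrow> phi x (lmul F G) = phi x F * phi x G"
  using phi_lmul_ub ubd_def by blast

lemma phi_inj: assumes "ubd F" "ubd G" "\<And>x. phi x F = phi x G" shows "F = G"
proof (intro ext)
  fix m x
  have "F m x = phi x F $$ (-m)" using assms(1) by simp
  also have "\<dots> = phi x G $$ (-m)" using assms(3) by simp
  also have "\<dots> = G m x" using assms(2) by simp
  finally show "F m x = G m x" .
qed

lemma phi_lsub[simp]: "ubd F \<Longrightarrow> ubd G \<Longrightarrow> phi x (lsub F G) = phi x F - phi x G"
  by (rule fls_eqI) (simp add: lone_apply lzero_apply)
lemma phi_ladd[simp]: "ubd F \<Longrightarrow> ubd G \<Longrightarrow> phi x (ladd F G) = phi x F + phi x G"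
  by (rule fls_eqI) (simp add: lone_apply lzero_apply)
lemma phi_lneg[simp]: "ubd F \<Longrightarrow> phi x (lneg F) = - phi x F"
  by (rule fls_eqI) (simp add: lone_apply lzero_apply)
lemma phi_lone[simp]: "phi x lone = 1"
  by (rule fls_eqI) (simp add: lone_apply lzero_apply)
lemma phi_lzero[simp]: "phi x lzero = 0"
  by (rule fls_eqI) (simp add: lone_apply lzero_apply)
lemma phi_cst[simp]: "phi x (cst c) = fls_const (c x)"
  by (rule fls_eqI) (simp add: lone_apply lzero_apply)
lemma phi_lshift[simp]: "ubd F \<Longrightarrow> phi x (lshift F) = fls_X_inv * phi x F"
  by (rule fls_eqI) (simp add: fls_X_inv_times_conv_shift algebra_simps)
lemma phi_lpow[simp]: "ubd F \<Longrightarrow> phi x (lpow F n) = phi x F ^ n"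
  by (induction n) auto
lemma phi_ldv[simp]: "ubd F \<Longrightarrow> phi x (ldv F) = - (fls_X ^ 2 * fls_deriv (phi x F))"
  by (rule fls_eqI) (simp add: fls_X_power_times_conv_shift algebra_simps)

lemma fls_deriv_power: "fls_deriv (f ^ n) = of_nat n * f ^ (n - 1) * fls_deriv (f :: real fls)"
proof (induction n)
  case 0 then show ?case by simp
next
  case (Suc n)
  then show ?case
    by (cases n) (auto simp: algebra_simps)
qed



section \<open>Directional derivatives\<close>

definition Dl :: "(pt \<Rightarrow> real \<Rightarrow> pt) \<Rightarrow> (pt \<Rightarrow> real) \<Rightarrow> coef \<Rightarrow> coef" where
  "Dl e c f = (\<lambda>x. deriv (\<lambda>y. f (e x y)) (c x))"
definition dok :: "(pt \<Rightarrow> real \<Rightarrow> pt) \<Rightarrow> (pt \<Rightarrow> real) \<Rightarrow> coef \<Rightarrow> bool" where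
  "dok e c f \<longleftrightarrow> (\<forall>x. (\<lambda>y. f (e x y)) differentiable (at (c x)))"
definition DS :: "(pt \<Rightarrow> real \<Rightarrow> pt) \<Rightarrow> (pt \<Rightarrow> real) \<Rightarrow> lser \<Rightarrow> lser" where
  "DS e c F = (\<lambda>m. Dl e c (F m))"
definition dokS :: "(pt \<Rightarrow> real \<Rightarrow> pt) \<Rightarrow> (pt \<Rightarrow> real) \<Rightarrow> lser \<Rightarrow> bool" where
  "dokS e c F \<longleftrightarrow> (\<forall>m. dok e c (F m))"

definition eT :: "nat \<Rightarrow> pt \<Rightarrow> real \<Rightarrow> pt" where "eT n x y = ((fst x)(n := y), fst (snd x), snd (snd x))"
definition cT :: "nat \<Rightarrow> pt \<Rightarrow> real" where "cT n x = fst x n"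
definition eS :: "pt \<Rightarrow> real \<Rightarrow> pt" where "eS x y = (fst x, fst (snd x), y)"
definition cS :: "pt \<Rightarrow> real" where "cS x = snd (snd x)"

lemma line_T: "eT n x (cT n x) = x" by (simp add: eT_def cT_def)
lemma line_S: "eS x (cS x) = x" by (simp add: eS_def cS_def)

lemma dTc_Dl: "dTc n f = Dl (eT n) (cT n) f"
  by (auto simp: dTc_def Dl_def eT_def cT_def)
lemma dSc_Dl: "dSc f = Dl eS cS f"
  by (auto simp: dSc_def Dl_def eS_def cS_def)
lemma dT_DS: "dT n F = DS (eT n) (cT n) F"
  by (simp add: dT_def DS_def dTc_Dl)
lemma dS_DS: "dS F = DS eS cS F"
  by (simp add: dS_def DS_def dSc_Dl)

lemma sep_dok_T: "sep_diff f \<Longrightarrow> 1 \<le> n \<Longrightarrow> dok (eT n) (cT n) f"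
  unfolding sep_diff_def dok_def eT_def cT_def by auto
lemma sep_dok_S: "sep_diff f \<Longrightarrow> dok eS cS f"
  unfolding sep_diff_def dok_def eS_def cS_def by auto

lemma DS_apply: "DS e c F m = Dl e c (F m)" by (simp add: DS_def)

lemma Dl_has: "dok e c f \<Longrightarrow> ((\<lambda>y. f (e x y)) has_field_derivative Dl e c f x) (at (c x))"
  unfolding dok_def Dl_def using DERIV_deriv_iff_real_differentiable by blast

lemma has_dok:
  assumes "\<And>x. ((\<lambda>y. f (e x y)) has_field_derivative f' x) (at (c x))"
  shows "dok e c f" "Dl e c f = f'"
proof -
  show "dok e c f" unfolding dok_def using assms real_differentiable_def by blast
  show "Dl e c f = f'" unfolding Dl_def using assms DERIV_imp_deriv by blast
qed

lemma Dl_const[simp]: "Dl e c (\<lambda>_. k) = (\<lambda>_. 0)"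
  by (simp add: Dl_def)
lemma dok_const[simp]: "dok e c (\<lambda>_. k)"
  by (simp add: dok_def)

lemma ub_DS: "ub N F \<Longrightarrow> ub N (DS e c F)"
  by (simp add: ub_def DS_def)
lemma ubd_DS[simp]: "ubd F \<Longrightarrow> ubd (DS e c F)"
  by (meson ubd_def ub_DS)

lemma DS_lpos: "DS e c (lpos F) = lpos (DS e c F)"
  by (auto simp: DS_def lpos_def)
lemma DS_lnegpart: "DS e c (lnegpart F) = lnegpart (DS e c F)"
  by (auto simp: DS_def lnegpart_def)
lemma DS_lone: "DS e c lone = lzero"
  by (auto simp: DS_def lone_def lzero_def)
lemma dokS_lpos: "dokS e c F \<Longrightarrow> dokS e c (lpos F)"
  by (auto simp: dokS_def lpos_def)
lemma dokS_lone: "dokS e c lone"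
  by (auto simp: dokS_def lone_def)

lemma lmul_fun:
  assumes "ub N1 F" "ub N2 G"
  shows "lmul F G m = (\<lambda>z. \<Sum>i\<in>{m-N2..N1}. F i z * G (m-i) z)"
  using lmul_bridge[OF assms] by (intro ext) simp

lemma DS_lmul:
  assumes line: "\<And>x. e x (c x) = x"
    and F: "ub N1 F" and G: "ub N2 G" and dF: "dokS e c F" and dG: "dokS e c G"
  shows "dokS e c (lmul F G)" "DS e c (lmul F G) = ladd (lmul (DS e c F) G) (lmul F (DS e c G))"
proof -
  define f' where "f' m x = (\<Sum>i\<in>{m-N2..N1}. Dl e c (F i) x * G (m-i) x + Dl e c (G (m-i)) x * F i x)" for m x
  have has: "((\<lambda>y. lmul F G m (e x y)) has_field_derivative f' m x) (at (c x))" for m x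
  proof -
    have "((\<lambda>y. \<Sum>i\<in>{m-N2..N1}. F i (e x y) * G (m-i) (e x y)) has_field_derivative
       (\<Sum>i\<in>{m-N2..N1}. Dl e c (F i) x * G (m-i) (e x (c x)) + Dl e c (G (m-i)) x * F i (e x (c x))))
       (at (c x))"
      using dF dG unfolding dokS_def
      by (intro DERIV_sum DERIV_mult Dl_has) auto
    then show ?thesis unfolding lmul_fun[OF F G] f'_def line .
  qed
  show "dokS e c (lmul F G)" unfolding dokS_def using has has_dok(1) by blast
  show "DS e c (lmul F G) = ladd (lmul (DS e c F) G) (lmul F (DS e c G))"
  proof (intro ext)
    fix m x
    have "DS e c (lmul F G) m x = f' m x" using has has_dok(2) by (simp add: DS_def) metis
    also have "\<dots> = ladd (lmul (DS e c F) G) (lmul F (DS e c G)) m x"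
      unfolding f'_def ladd_apply lmul_bridge[OF ub_DS[OF F] G] lmul_bridge[OF F ub_DS[OF G]]
      by (simp add: sum.distrib algebra_simps DS_apply)
    finally show "DS e c (lmul F G) m x = ladd (lmul (DS e c F) G) (lmul F (DS e c G)) m x" .
  qed
qed

lemma DS_lpow:
  assumes line: "\<And>x. e x (c x) = x" and F: "ub N F" and dF: "dokS e c F"
  shows "dokS e c (lpow F n) \<and> phi x (DS e c (lpow F n)) = of_nat n * phi x F ^ (n - 1) * phi x (DS e c F)"
proof (induction n)
  case 0
  then show ?case by (simp add: DS_lone dokS_lone)
next
  case (Suc n)
  have ubn: "ub (int n * N) (lpow F n)" by (rule ub_lpow[OF F])
  have ud: "ubd F" "ubd (lpow F n)" using F ubn ubdI by blast+
  have "dokS e c (lpow F (Suc n))" using DS_lmul(1)[OF line F ubn dF] Suc.IH by simp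
  moreover have "phi x (DS e c (lpow F (Suc n))) = of_nat (Suc n) * phi x F ^ n * phi x (DS e c F)"
  proof -
    have "phi x (DS e c (lpow F (Suc n))) = phi x (DS e c F) * phi x F ^ n + phi x F * phi x (DS e c (lpow F n))"
      using DS_lmul(2)[OF line F ubn dF] Suc.IH ud by simp
    also have "\<dots> = phi x (DS e c F) * phi x F ^ n + phi x F * (of_nat n * phi x F ^ (n - 1) * phi x (DS e c F))"
      using Suc.IH by simp
    also have "phi x F * (of_nat n * phi x F ^ (n - 1) * phi x (DS e c F)) = of_nat n * phi x F ^ n * phi x (DS e c F)"
      by (cases n) (auto simp: algebra_simps)
    also have "phi x (DS e c F) * phi x F ^ n + of_nat n * phi x F ^ n * phi x (DS e c F) = of_nat (Suc n) * phi x F ^ n * phi x (DS e c F)"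
      by (simp add: algebra_simps)
    finally show ?thesis .
  qed
  ultimately show ?case by simp
qed



section \<open>Change of spectral variable\<close>

definition ek :: "real \<Rightarrow> int \<Rightarrow> int \<Rightarrow> real" where
  "ek w j m = (if m \<le> j then ((of_int j :: real) gchoose nat (j - m)) * w ^ nat (j - m) else 0)"

lemma ek_below[simp]: "j < m \<Longrightarrow> ek w j m = 0" by (simp add: ek_def)
lemma ek_same[simp]: "ek w j j = 1" by (simp add: ek_def)

lemma ek_pos_neg: assumes "0 \<le> j" "m < 0" shows "ek w j m = 0"
proof -
  have "(of_int j :: real) = of_nat (nat j)" using assms by simp
  then have "((of_int j :: real) gchoose nat (j - m)) = of_nat (nat j choose nat (j - m))"
    by (simp only: binomial_gbinomial)
  also have "nat j choose nat (j - m) = 0" using assms by (intro binomial_eq_0) linarith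
  finally show ?thesis by (simp add: ek_def)
qed

lemma toK_bridge:
  assumes F: "ub N F" and A: "A \<le> m"
  shows "toK u F m x = (\<Sum>j\<in>{A..N}. F j x * ek (- u x) j m)"
  unfolding toK_def
proof (rule sum.mono_neutral_cong_left)
  show "finite {A..N}" by simp
  show "{j. m \<le> j \<and> F j x \<noteq> 0} \<subseteq> {A..N}"
  proof
    fix j assume "j \<in> {j. m \<le> j \<and> F j x \<noteq> 0}"
    then have "m \<le> j" "F j x \<noteq> 0" by auto
    then have "j \<le> N" using ubD[OF F, of j x] by (meson not_le)
    then show "j \<in> {A..N}" using A \<open>m \<le> j\<close> by auto
  qed
  show "\<forall>i\<in>{A..N} - {j. m \<le> j \<and> F j x \<noteq> 0}. F i x * ek (- u x) i m = 0"
  proof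
    fix i assume "i \<in> {A..N} - {j. m \<le> j \<and> F j x \<noteq> 0}"
    then have "\<not> m \<le> i \<or> F i x = 0" by auto
    then show "F i x * ek (- u x) i m = 0" by (auto simp: not_le)
  qed
  show "F j x * (of_int j gchoose nat (j - m)) * (- u x) ^ nat (j - m) = F j x * ek (- u x) j m"
    if "j \<in> {j. m \<le> j \<and> F j x \<noteq> 0}" for j
    using that by (simp add: ek_def)
qed

lemma ub_toK: assumes "ub N F" shows "ub N (toK u F)"
  unfolding ub_def
proof (intro allI impI ext)
  fix m x assume "N < m"
  then show "toK u F m x = 0" using toK_bridge[OF assms, of m m] by simp
qed

lemma ubd_toK[simp]: "ubd F \<Longrightarrow> ubd (toK u F)"
  by (meson ubd_def ub_toK)

lemma toK_lsub: assumes "ub N1 F" "ub N2 G"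
  shows "toK u (lsub F G) = lsub (toK u F) (toK u G)"
proof (intro ext)
  fix m x
  have F: "ub (max N1 N2) F" and G: "ub (max N1 N2) G" using assms ub_mono by auto
  show "toK u (lsub F G) m x = lsub (toK u F) (toK u G) m x"
    unfolding lsub_apply toK_bridge[OF F order_refl] toK_bridge[OF G order_refl]
      toK_bridge[OF ub_lsub[OF F G] order_refl]
    by (simp add: sum_subtractf[symmetric] algebra_simps)
qed

lemma toK_cst: "toK u (cst c) = cst c"
proof (intro ext)
  fix m x
  show "toK u (cst c) m x = cst c m x"
  proof (cases "m \<le> 0")
    case True
    have "toK u (cst c) m x = (\<Sum>j\<in>{m..0}. cst c j x * ek (- u x) j m)"
      by (rule toK_bridge[OF ub_cst order_refl])
    also have "\<dots> = (\<Sum>j\<in>{0}. cst c j x * ek (- u x) j m)"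
      by (rule sum.mono_neutral_right) (use True in auto)
    also have "\<dots> = cst c m x"
      using True ek_pos_neg[of 0 m "- u x"] by (cases "m = 0") auto
    finally show ?thesis .
  next
    case False
    then show ?thesis using ub_toK[OF ub_cst, of u c] ub_cst[of c] by (simp add: ub_def)
  qed
qed

lemma toK_P: "toK (L 0) (lshift lone) = Pk L"
proof (intro ext)
  fix m x
  have ub1: "ub 1 (lshift lone)" using ub_lshift[OF ub_lone] by simp
  show "toK (L 0) (lshift lone) m x = Pk L m x"
  proof (cases "m \<le> 1")
    case True
    have "toK (L 0) (lshift lone) m x = (\<Sum>j\<in>{m..1}. lshift lone j x * ek (- L 0 x) j m)"
      by (rule toK_bridge[OF ub1 order_refl])
    also have "\<dots> = (\<Sum>j\<in>{1}. lshift lone j x * ek (- L 0 x) j m)"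
      by (rule sum.mono_neutral_right) (use True in \<open>auto simp: lone_apply\<close>)
    also have "\<dots> = ek (- L 0 x) 1 m" by (simp add: lone_apply)
    also have "\<dots> = Pk L m x"
    proof -
      consider "m = 1" | "m = 0" | "m < 0" using True by linarith
      then show ?thesis
      proof cases
        case 3 then show ?thesis using ek_pos_neg[of 1 m] by (simp add: Pk_def)
      qed (auto simp: Pk_def ek_def)
    qed
    finally show ?thesis .
  next
    case False
    then show ?thesis using ub_toK[OF ub1, of "L 0"] by (simp add: ub_def Pk_def)
  qed
qed

lemma toK_lpos: assumes F: "ub N F" shows "lpos (toK u F) = toK u (lpos F)"
proof (intro ext)
  fix m x
  show "lpos (toK u F) m x = toK u (lpos F) m x"
    unfolding lpos_apply toK_bridge[OF F order_refl] toK_bridge[OF ub_lpos[OF F] order_refl]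
  proof (cases "0 \<le> m")
    case False
    then show "(if 0 \<le> m then \<Sum>j = m..N. F j x * ek (- u x) j m else 0) =
      (\<Sum>j = m..N. (if 0 \<le> j then F j x else 0) * ek (- u x) j m)"
      using ek_pos_neg[of _ m "- u x"] by simp (intro sum.neutral, auto)
  qed (auto intro!: sum.cong)
qed

lemma ek_E1: "of_int (m + 1) * ek w j (m + 1) = of_int j * ek w (j - 1) m"
proof (cases "m + 1 \<le> j")
  case True
  define k where "k = nat (j - m - 1)"
  have k1: "nat (j - (m + 1)) = k" "nat (j - 1 - m) = k" by (simp_all add: k_def)
  have "(of_int j - of_nat k) * ((of_int j :: real) gchoose k) = of_int j * ((of_int j - 1) gchoose k)"
    by (rule gbinomial_absorb_comp)
  moreover have "(of_int j :: real) - of_nat k = of_int (m + 1)" using True by (simp add: k_def)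
  ultimately show ?thesis using True by (simp add: ek_def k1)
next
  case False then show ?thesis by simp
qed

lemma toK_ldv: assumes F: "ub N F" shows "ldv (toK u F) = toK u (ldv F)"
proof (intro ext)
  fix m x
  have F1: "ub (N+1) F" using ub_mono[OF F] by simp
  have dF: "ub N (ldv F)" using ub_mono[OF ub_ldv[OF F]] by simp
  have "ldv (toK u F) m x = of_int (m+1) * (\<Sum>j\<in>{m..N+1}. F j x * ek (- u x) j (m+1))"
    using toK_bridge[OF F1, of m "m+1"] by simp
  also have "\<dots> = (\<Sum>j\<in>{m..N+1}. F j x * (of_int (m+1) * ek (- u x) j (m+1)))"
    by (simp add: sum_distrib_left algebra_simps)
  also have "\<dots> = (\<Sum>j\<in>{m..N+1}. F j x * (of_int j * ek (- u x) (j - 1) m))"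
    by (simp only: ek_E1)
  also have "\<dots> = (\<Sum>j\<in>{m+1..N+1}. F j x * (of_int j * ek (- u x) (j - 1) m))"
    by (rule sum.mono_neutral_right) auto
  also have "\<dots> = (\<Sum>j\<in>{m..N}. ldv F j x * ek (- u x) j m)"
    by (rule sum.reindex_bij_witness[of _ "\<lambda>j. j + 1" "\<lambda>j. j - 1"]) (auto simp: algebra_simps)
  also have "\<dots> = toK u (ldv F) m x"
    using toK_bridge[OF dF, of m m] by simp
  finally show "ldv (toK u F) m x = toK u (ldv F) m x" .
qed


lemma lmul_cst: assumes G: "ub N G" shows "lmul (cst c) G m x = c x * G m x"
proof -
  have G': "ub (max N m) G" using ub_mono[OF G] by simp
  have "lmul (cst c) G m x = (\<Sum>i\<in>{m - max N m..0}. cst c i x * G (m - i) x)"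
    by (rule lmul_bridge[OF ub_cst G'])
  also have "\<dots> = (\<Sum>i\<in>{0}. cst c i x * G (m - i) x)"
    by (rule sum.mono_neutral_right) auto
  finally show ?thesis by simp
qed

lemma ek_E2:
  assumes "m \<le> j"
  shows "((of_int j :: real) gchoose nat (j - m)) * of_nat (nat (j - m)) * w ^ (nat (j - m) - Suc 0)
         = of_int (m + 1) * ek w j (m + 1)"
proof (cases "j = m")
  case True then show ?thesis by simp
next
  case False
  define k where "k = nat (j - m - 1)"
  have k1: "nat (j - m) = Suc k" "nat (j - (m + 1)) = k" using assms False by (simp_all add: k_def)
  have "(of_int j :: real) * (of_int j gchoose k) = of_nat k * (of_int j gchoose k) + of_nat (Suc k) * (of_int j gchoose Suc k)"
    by (rule gbinomial_mult_1)
  then have "of_nat (Suc k) * ((of_int j :: real) gchoose Suc k) = (of_int j - of_nat k) * (of_int j gchoose k)"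
    by (simp add: algebra_simps)
  moreover have "(of_int j :: real) - of_nat k = of_int (m + 1)" using assms False by (simp add: k_def)
  ultimately have e1: "of_nat (Suc k) * ((of_int j :: real) gchoose Suc k) = of_int (m + 1) * (of_int j gchoose k)"
    by simp
  have e2: "ek w j (m+1) = (of_int j gchoose k) * w^k" using assms False k1 by (simp add: ek_def)
  show ?thesis unfolding e2 k1(1) using e1 by (simp add: algebra_simps)
qed

lemma toK_DS:
  assumes line: "\<And>x. e x (c x) = x" and F: "ub N F" and dF: "dokS e c F" and du: "dok e c u"
  shows "DS e c (toK u F) = lsub (toK u (DS e c F)) (lmul (cst (Dl e c u)) (ldv (toK u F)))"
proof (intro ext)
  fix m x
  define C where "C j = ((of_int j :: real) gchoose nat (j - m))" for j
  define k where "k j = nat (j - m)" for j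
  have hfun: "toK u F m = (\<lambda>z. \<Sum>j\<in>{m..N}. F j z * (C j * (- u z) ^ k j))"
  proof
    fix z show "toK u F m z = (\<Sum>j\<in>{m..N}. F j z * (C j * (- u z) ^ k j))"
      unfolding toK_bridge[OF F order_refl] by (intro sum.cong) (auto simp: ek_def C_def k_def)
  qed
  have "((\<lambda>y. \<Sum>j\<in>{m..N}. F j (e x y) * (C j * (- u (e x y)) ^ k j)) has_field_derivative
     (\<Sum>j\<in>{m..N}. Dl e c (F j) x * (C j * (- u (e x (c x))) ^ k j) +
        (C j * (of_nat (k j) * (- Dl e c u x * (- u (e x (c x))) ^ (k j - Suc 0)))) * F j (e x (c x))))
     (at (c x))"
    using dF du unfolding dokS_def
    by (intro DERIV_sum DERIV_mult DERIV_cmult DERIV_power DERIV_minus Dl_has) auto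
  then have "DS e c (toK u F) m x = (\<Sum>j\<in>{m..N}. Dl e c (F j) x * (C j * (- u x) ^ k j) +
        (C j * (of_nat (k j) * (- Dl e c u x * (- u x) ^ (k j - Suc 0)))) * F j x)"
    unfolding DS_apply Dl_def hfun line by (rule DERIV_imp_deriv)
  also have "\<dots> = (\<Sum>j\<in>{m..N}. Dl e c (F j) x * ek (- u x) j m) -
      Dl e c u x * (of_int (m + 1) * (\<Sum>j\<in>{m..N}. F j x * ek (- u x) j (m + 1)))"
  proof -
    have "(\<Sum>j\<in>{m..N}. Dl e c (F j) x * (C j * (- u x) ^ k j) +
        (C j * (of_nat (k j) * (- Dl e c u x * (- u x) ^ (k j - Suc 0)))) * F j x)
      = (\<Sum>j\<in>{m..N}. Dl e c (F j) x * ek (- u x) j m - Dl e c u x * (F j x * (of_int (m + 1) * ek (- u x) j (m + 1))))"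
    proof (intro sum.cong refl)
      fix j assume "j \<in> {m..N}"
      then have mj: "m \<le> j" by simp
      have "C j * of_nat (k j) * (- u x) ^ (k j - Suc 0) = of_int (m + 1) * ek (- u x) j (m + 1)"
        unfolding C_def k_def by (rule ek_E2[OF mj])
      moreover have "C j * (- u x) ^ k j = ek (- u x) j m" using mj by (simp add: ek_def C_def k_def)
      moreover have "(C j * (of_nat (k j) * (- Dl e c u x * (- u x) ^ (k j - Suc 0)))) * F j x
          = - (Dl e c u x * (F j x * (C j * of_nat (k j) * (- u x) ^ (k j - Suc 0))))"
        by (simp add: algebra_simps)
      ultimately show "Dl e c (F j) x * (C j * (- u x) ^ k j) +
        (C j * (of_nat (k j) * (- Dl e c u x * (- u x) ^ (k j - Suc 0)))) * F j x =
        Dl e c (F j) x * ek (- u x) j m - Dl e c u x * (F j x * (of_int (m + 1) * ek (- u x) j (m + 1)))"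
        by simp
    qed
    then show ?thesis by (simp add: sum_subtractf sum_distrib_left algebra_simps)
  qed
  also have "\<dots> = lsub (toK u (DS e c F)) (lmul (cst (Dl e c u)) (ldv (toK u F))) m x"
    unfolding lsub_apply lmul_cst[OF ub_ldv[OF ub_toK[OF F]]] ldv_apply
      toK_bridge[OF ub_DS[OF F] order_refl, of u]
    using toK_bridge[OF F, of m "m+1" u x] by (simp add: DS_apply)
  finally show "DS e c (toK u F) m x = lsub (toK u (DS e c F)) (lmul (cst (Dl e c u)) (ldv (toK u F))) m x" .
qed



lemma ek_vandermonde:
  assumes lo: "lo \<le> m - l" and hi: "j \<le> hi"
  shows "(\<Sum>i\<in>{lo..hi}. ek w j i * ek w l (m - i)) = ek w (j + l) m"
proof -
  have 1: "(\<Sum>i\<in>{lo..hi}. ek w j i * ek w l (m - i)) = (\<Sum>i\<in>{m-l..j}. ek w j i * ek w l (m - i))"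
  proof (rule sum.mono_neutral_right)
    show "{m - l..j} \<subseteq> {lo..hi}" using lo hi by auto
    show "\<forall>i\<in>{lo..hi} - {m - l..j}. ek w j i * ek w l (m - i) = 0"
    proof
      fix i assume "i \<in> {lo..hi} - {m - l..j}"
      then have "i < m - l \<or> j < i" by auto
      then show "ek w j i * ek w l (m - i) = 0" by auto
    qed
  qed simp
  show ?thesis
  proof (cases "m \<le> j + l")
    case False
    then show ?thesis unfolding 1 by simp
  next
    case True
    define K where "K = nat (j + l - m)"
    have 2: "(\<Sum>i\<in>{m-l..j}. ek w j i * ek w l (m - i)) =
        (\<Sum>k\<in>{0..K}. ((of_int j gchoose k) * w ^ k) * ((of_int l gchoose (K - k)) * w ^ (K - k)))"
    proof (rule sum.reindex_bij_witness[of _ "\<lambda>k. j - int k" "\<lambda>i. nat (j - i)"])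
      fix i assume i: "i \<in> {m-l..j}"
      show "j - int (nat (j - i)) = i" using i by simp
      show "nat (j - i) \<in> {0..K}" using i by (auto simp: K_def)
      have "nat (l - (m - i)) = nat ((j + l - m) - (j - i))" by (simp add: algebra_simps)
      also have "\<dots> = nat (j + l - m) - nat (j - i)" using i by (intro nat_diff_distrib) auto
      finally have a: "nat (l - (m - i)) = K - nat (j - i)" by (simp add: K_def)
      show "(of_int j gchoose nat (j - i)) * w ^ nat (j - i) *
          ((of_int l gchoose (K - nat (j - i))) * w ^ (K - nat (j - i))) = ek w j i * ek w l (m - i)"
        using i by (simp add: ek_def a)
    next
      fix k assume k: "k \<in> {0..K}"
      show "nat (j - (j - int k)) = k" by simp
      show "j - int k \<in> {m - l..j}" using k True by (auto simp: K_def)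
    qed
    also have "\<dots> = w ^ K * (\<Sum>k=0..K. (of_int j gchoose k) * (of_int l gchoose (K - k)))"
      unfolding sum_distrib_left
    proof (intro sum.cong refl)
      fix k assume "k \<in> {0..K}"
      then have "w ^ k * w ^ (K - k) = w ^ K" by (simp add: power_add[symmetric])
      then show "(of_int j gchoose k) * w ^ k * ((of_int l gchoose (K - k)) * w ^ (K - k)) =
          w ^ K * ((of_int j gchoose k) * (of_int l gchoose (K - k)))"
        by (simp add: algebra_simps)
    qed
    also have "\<dots> = w ^ K * ((of_int j + of_int l) gchoose K)"
      by (simp add: gbinomial_Vandermonde)
    also have "\<dots> = ek w (j + l) m" using True by (simp add: ek_def K_def)
    finally show ?thesis unfolding 1 .
  qed
qed

lemma lmul_bridge_gen:
  assumes F: "ub N1 F" and G: "ub N2 G" and J: "finite J" "{r-N2..N1} \<subseteq> J"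
  shows "lmul F G r x = (\<Sum>j\<in>J. F j x * G (r-j) x)"
  unfolding lmul_bridge[OF F G]
proof (rule sum.mono_neutral_left[OF J])
  show "\<forall>i\<in>J - {r - N2..N1}. F i x * G (r - i) x = 0"
  proof
    fix i assume "i \<in> J - {r - N2..N1}"
    then have "N1 < i \<or> N2 < r - i" by auto
    then show "F i x * G (r - i) x = 0" using ubD[OF F, of i x] ubD[OF G, of "r - i" x] by auto
  qed
qed

lemma toK_lmul:
  assumes F: "ub N1 F" and G: "ub N2 G"
  shows "toK u (lmul F G) = lmul (toK u F) (toK u G)"
proof (intro ext)
  fix m x
  define w where "w = - u x"
  define J where "J = {m-N2..N1}"
  define Lb where "Lb = {m-N1..N2}"
  have R: "lmul (toK u F) (toK u G) m x = (\<Sum>j\<in>J. \<Sum>l\<in>Lb. (F j x * G l x) * ek w (j+l) m)"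
  proof -
    have "lmul (toK u F) (toK u G) m x = (\<Sum>i\<in>{m-N2..N1}. toK u F i x * toK u G (m-i) x)"
      by (rule lmul_bridge[OF ub_toK[OF F] ub_toK[OF G]])
    also have "\<dots> = (\<Sum>i\<in>{m-N2..N1}. (\<Sum>j\<in>J. F j x * ek w j i) * (\<Sum>l\<in>Lb. G l x * ek w l (m-i)))"
    proof (intro sum.cong refl)
      fix i assume i: "i \<in> {m-N2..N1}"
      show "toK u F i x * toK u G (m-i) x = (\<Sum>j\<in>J. F j x * ek w j i) * (\<Sum>l\<in>Lb. G l x * ek w l (m-i))"
        unfolding J_def Lb_def w_def using i
        by (simp add: toK_bridge[OF F, of "m-N2" i] toK_bridge[OF G, of "m-N1" "m-i"])
    qed
    also have "\<dots> = (\<Sum>i\<in>{m-N2..N1}. \<Sum>j\<in>J. \<Sum>l\<in>Lb. (F j x * G l x) * (ek w j i * ek w l (m-i)))"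
      by (simp add: sum_product algebra_simps)
    also have "\<dots> = (\<Sum>j\<in>J. \<Sum>i\<in>{m-N2..N1}. \<Sum>l\<in>Lb. (F j x * G l x) * (ek w j i * ek w l (m-i)))"
      by (rule sum.swap)
    also have "\<dots> = (\<Sum>j\<in>J. \<Sum>l\<in>Lb. \<Sum>i\<in>{m-N2..N1}. (F j x * G l x) * (ek w j i * ek w l (m-i)))"
      by (simp add: sum.swap[of _ "{m-N2..N1}"])
    also have "\<dots> = (\<Sum>j\<in>J. \<Sum>l\<in>Lb. (F j x * G l x) * ek w (j+l) m)"
    proof (intro sum.cong refl)
      fix j l assume j: "j \<in> J" and l: "l \<in> Lb"
      have "(\<Sum>i\<in>{m-N2..N1}. ek w j i * ek w l (m-i)) = ek w (j+l) m"
        using j l by (intro ek_vandermonde) (auto simp: J_def Lb_def)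
      then show "(\<Sum>i\<in>{m-N2..N1}. (F j x * G l x) * (ek w j i * ek w l (m-i))) = (F j x * G l x) * ek w (j+l) m"
        by (simp add: sum_distrib_left[symmetric])
    qed
    finally show ?thesis .
  qed
  have inner: "(\<Sum>r\<in>{m..N1+N2}. G (r-j) x * ek w r m) = (\<Sum>l\<in>Lb. G l x * ek w (j+l) m)"
    if j: "j \<le> N1" for j
  proof -
    have "(\<Sum>r\<in>{m..N1+N2}. G (r-j) x * ek w r m) = (\<Sum>l\<in>{m-j..N1+N2-j}. G l x * ek w (j+l) m)"
      by (rule sum.reindex_bij_witness[of _ "\<lambda>l. j + l" "\<lambda>r. r - j"]) auto
    also have "\<dots> = (\<Sum>l\<in>Lb. G l x * ek w (j+l) m)"
    proof (rule sum.mono_neutral_cong)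
      show "G i x * ek w (j + i) m = 0" if "i \<in> Lb - {m - j..N1 + N2 - j}" for i
      proof -
        have "i < m - j \<or> N2 < i" using that j by (auto simp: Lb_def)
        then show ?thesis using ubD[OF G, of i x] by auto
      qed
      show "G i x * ek w (j + i) m = 0" if "i \<in> {m - j..N1 + N2 - j} - Lb" for i
      proof -
        have "i < m - j \<or> N2 < i" using that j by (auto simp: Lb_def)
        then show ?thesis using ubD[OF G, of i x] by auto
      qed
    qed (auto simp: Lb_def)
    finally show ?thesis .
  qed
  have "toK u (lmul F G) m x = (\<Sum>r\<in>{m..N1+N2}. lmul F G r x * ek w r m)"
    unfolding w_def by (rule toK_bridge[OF ub_lmul[OF F G] order_refl])
  also have "\<dots> = (\<Sum>r\<in>{m..N1+N2}. (\<Sum>j\<in>J. F j x * G (r-j) x) * ek w r m)"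
  proof (intro sum.cong refl)
    fix r assume "r \<in> {m..N1+N2}"
    then have "lmul F G r x = (\<Sum>j\<in>J. F j x * G (r-j) x)"
      by (intro lmul_bridge_gen[OF F G]) (auto simp: J_def)
    then show "lmul F G r x * ek w r m = (\<Sum>j\<in>J. F j x * G (r-j) x) * ek w r m" by simp
  qed
  also have "\<dots> = (\<Sum>j\<in>J. F j x * (\<Sum>r\<in>{m..N1+N2}. G (r-j) x * ek w r m))"
    by (simp add: sum_distrib_left sum_distrib_right sum.swap[of _ J] algebra_simps)
  also have "\<dots> = (\<Sum>j\<in>J. F j x * (\<Sum>l\<in>Lb. G l x * ek w (j+l) m))"
    by (intro sum.cong refl) (simp add: inner J_def)
  also have "\<dots> = (\<Sum>j\<in>J. \<Sum>l\<in>Lb. (F j x * G l x) * ek w (j+l) m)"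
    by (simp add: sum_distrib_left algebra_simps)
  finally show "toK u (lmul F G) m x = lmul (toK u F) (toK u G) m x" using R by simp
qed

lemma toK_lone: "toK u lone = lone"
proof -
  have "lone = cst (\<lambda>_. 1)" by (auto simp: lone_def cst_def)
  then show ?thesis using toK_cst by metis
qed

lemma toK_lpow: assumes F: "ub N F" shows "toK u (lpow F n) = lpow (toK u F) n"
proof (induction n)
  case 0 then show ?case by (simp add: toK_lone)
next
  case (Suc n) then show ?case using toK_lmul[OF F ub_lpow[OF F]] by simp
qed



lemma ubd_dT[simp]: "ubd F \<Longrightarrow> ubd (dT k F)" by (simp add: dT_DS)
lemma ubd_dS[simp]: "ubd F \<Longrightarrow> ubd (dS F)" by (simp add: dS_DS)
lemma dS_apply: "dS F m x = dSc (F m) x" by (simp add: dS_def)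
lemma dSc_const[simp]: "dSc (\<lambda>_. k) = (\<lambda>_. 0)" by (simp add: dSc_Dl)
lemma dTc_const[simp]: "dTc n (\<lambda>_. k) = (\<lambda>_. 0)" by (simp add: dTc_Dl)

lemma ub_dS: "ub N F \<Longrightarrow> ub N (dS F)" by (simp add: dS_DS ub_DS)

lemma lmul_lone: "ubd F \<Longrightarrow> lmul F lone = F"
  by (rule phi_inj) auto

lemma pworld:
  assumes ubL: "ub 1 L" and L1: "L 1 = (\<lambda>_. 1)"
    and d1: "dokS (eT 1) (cT 1) L" and ds: "dokS eS cS L"
    and Lt1: "dT 1 L = todaBr (Bp L 1) L" and Ltn: "dT n L = todaBr (Bp L n) L"
  shows "dT 1 L = lshift (lsub (dS L) (lmul (cst (dSc (L 0))) (ldv L)))"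
    and "dT 1 (Bp L n) = ladd (cst (dTc n (L 0)))
            (lshift (lsub (dS (Bp L n)) (lmul (cst (dSc (L 0))) (ldv (Bp L n)))))"
proof -
  have uL: "ubd L" using ubL ubdI by blast
  define us where "us = cst (dSc (L 0))"
  have B1: "Bp L 1 = lpos L" by (simp add: Bp_def lmul_lone uL)
  have ldvB1: "ldv (lpos L) = lone"
  proof (intro ext)
    fix m x
    show "ldv (lpos L) m x = lone m x"
      using ubD[OF ubL, of "m+1" x] L1 by (cases "m = -1") (auto simp: lone_apply)
  qed
  have dsB1: "dS (lpos L) = us"
  proof (intro ext)
    fix m x
    have e: "dS (lpos L) m x = dSc (if 0 \<le> m then L m else (\<lambda>_. 0)) x"
      by (simp add: dS_apply lpos_def)
    show "dS (lpos L) m x = us m x"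
    proof (cases "m = 1 \<or> 1 < m")
      case True
      then have "L m = (\<lambda>_. 1) \<or> L m = (\<lambda>_. 0)" using L1 ubL ub_def[of 1 L] by auto
      then show ?thesis using True unfolding e us_def by auto
    next
      case False
      then have "m = 0 \<or> m < 0" by linarith
      then show ?thesis unfolding e us_def by auto
    qed
  qed
  show P1: "dT 1 L = lshift (lsub (dS L) (lmul (cst (dSc (L 0))) (ldv L)))"
    unfolding Lt1 B1 todaBr_def ldvB1 dsB1 us_def
    by (rule phi_inj) (auto simp: uL algebra_simps)
  define Ln where "Ln = lpow L n"
  have ubLn: "ub (int n) Ln" using ub_lpow[OF ubL] by (simp add: Ln_def)
  have uLn: "ubd Ln" using ubLn ubdI by blast
  have pow1: "phi x (dT 1 Ln) = of_nat n * phi x L ^ (n - 1) * phi x (dT 1 L)" for x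
    unfolding dT_DS Ln_def using DS_lpow[OF line_T ubL d1] by blast
  have pows: "phi x (dS Ln) = of_nat n * phi x L ^ (n - 1) * phi x (dS L)" for x
    unfolding dS_DS Ln_def using DS_lpow[OF line_S ubL ds] by blast
  have powd: "phi x (ldv Ln) = of_nat n * phi x L ^ (n - 1) * phi x (ldv L)" for x
    unfolding Ln_def using uL by (simp add: fls_deriv_power algebra_simps)
  have powd': "fls_deriv (phi x Ln) = of_nat n * phi x L ^ (n - 1) * fls_deriv (phi x L)" for x
    unfolding Ln_def using uL by (simp add: fls_deriv_power algebra_simps)
  have Z1: "dT 1 Ln = lshift (lsub (dS Ln) (lmul us (ldv Ln)))"
  proof (rule phi_inj)
    fix x
    show "phi x (dT 1 Ln) = phi x (lshift (lsub (dS Ln) (lmul us (ldv Ln))))"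
      using uLn uL unfolding us_def
      apply (subst pow1, subst P1)
      apply (simp add: pows powd' uL algebra_simps)
      done
  qed (use uLn in \<open>simp_all add: us_def\<close>)
  define B where "B = lpos Ln"
  define N where "N = lnegpart Ln"
  have uB: "ubd B" "ubd N" using uLn by (simp_all add: B_def N_def)
  have I1: "lmul (ldv Ln) (dS L) = lmul (dS Ln) (ldv L)"
    by (rule phi_inj) (simp_all add: uL uLn pows powd)
  have dec1: "ldv Ln = ladd (ldv B) (ldv N)"
    by (auto simp: B_def N_def algebra_simps intro!: ext)
  have dec2: "dS Ln = ladd (dS B) (dS N)"
    by (auto simp: B_def N_def dS_apply lpos_def lnegpart_def intro!: ext)
  have I2: "lsub (lmul (ldv B) (dS L)) (lmul (dS B) (ldv L)) = lsub (lmul (dS N) (ldv L)) (lmul (ldv N) (dS L))"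
  proof (rule phi_inj)
    fix x
    have "phi x (lmul (ldv Ln) (dS L)) = phi x (lmul (dS Ln) (ldv L))" using I1 by simp
    then have "(phi x (ldv B) + phi x (ldv N)) * phi x (dS L) = (phi x (dS B) + phi x (dS N)) * phi x (ldv L)"
      unfolding dec1 dec2 using uB uL by (simp only: phi_lmul phi_ladd ubd_ldv ubd_dS ubd_ladd)
    then show "phi x (lsub (lmul (ldv B) (dS L)) (lmul (dS B) (ldv L))) = phi x (lsub (lmul (dS N) (ldv L)) (lmul (ldv N) (dS L)))"
      using uB uL by (simp only: phi_lmul phi_lsub ubd_ldv ubd_dS ubd_lmul) (simp add: algebra_simps)
  qed (use uB uL in simp_all)
  have ubN: "ub (-1) N" by (simp add: N_def ub_lnegpart)
  have ubdsL: "ub 0 (dS L)"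
    unfolding ub_def
  proof (intro allI impI)
    fix m :: int assume "0 < m"
    then have "L m = (\<lambda>_. 1) \<or> L m = (\<lambda>_. 0)" using L1 ubL ub_def[of 1 L] by (cases "m = 1") auto
    then show "dS L m = (\<lambda>_. 0)" by (auto simp: dS_def)
  qed
  have ubldvL: "ub 0 (ldv L)" using ub_ldv[OF ubL] by simp
  have c1: "lmul (ldv N) (dS L) (-1) x = 0" for x
  proof -
    have "ub (-2 + 0) (lmul (ldv N) (dS L))" using ub_lmul[OF _ ubdsL] ub_ldv[OF ubN] by simp
    then show ?thesis using ubD[of "-2 + 0" "lmul (ldv N) (dS L)" "-1" x] by simp
  qed
  have c2: "lmul (dS N) (ldv L) (-1) x = dSc (Ln (-1)) x" for x
  proof -
    have "lmul (dS N) (ldv L) (-1) x = (\<Sum>i\<in>{-1-0..-1}. dS N i x * ldv L (-1-i) x)"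
      by (rule lmul_bridge[OF ub_dS[OF ubN] ubldvL])
    also have "\<dots> = dS N (-1) x * ldv L 0 x" by simp
    also have "\<dots> = dSc (Ln (-1)) x" using L1 by (simp add: N_def dS_apply lnegpart_def)
    finally show ?thesis .
  qed
  have R: "dTc n (L 0) x = dSc (Ln (-1)) x" for x
  proof -
    have "dTc n (L 0) x = dT n L 0 x" by (simp add: dT_def)
    also have "\<dots> = lsub (lmul (ldv B) (dS L)) (lmul (dS B) (ldv L)) (-1) x"
      unfolding Ltn todaBr_def by (simp add: Bp_def B_def Ln_def)
    also have "\<dots> = dSc (Ln (-1)) x"
      unfolding I2 lsub_apply c1 c2 by simp
    finally show ?thesis .
  qed
  have ubldvLn: "ub (int n) (ldv Ln)" using ub_mono[OF ub_ldv[OF ubLn]] by simp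
  have ubldvB: "ub (int n) (ldv B)" using ub_mono[OF ub_ldv[OF ub_lpos[OF ubLn]]] by (simp add: B_def)
  show "dT 1 (Bp L n) = ladd (cst (dTc n (L 0)))
            (lshift (lsub (dS (Bp L n)) (lmul (cst (dSc (L 0))) (ldv (Bp L n)))))"
  proof (intro ext)
    fix m x
    have lhs: "dT 1 (Bp L n) m x = (if 0 \<le> m then dS Ln (m-1) x - dSc (L 0) x * ldv Ln (m-1) x else 0)"
    proof -
      have "dT 1 (Bp L n) = lpos (dT 1 Ln)" by (simp add: Bp_def Ln_def dT_DS DS_lpos)
      then show ?thesis unfolding Z1 us_def by (simp add: lmul_cst[OF ubldvLn])
    qed
    have dsB: "dS (Bp L n) = lpos (dS Ln)" by (simp add: Bp_def Ln_def dS_DS DS_lpos)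
    show "dT 1 (Bp L n) m x = ladd (cst (dTc n (L 0)))
            (lshift (lsub (dS (Bp L n)) (lmul (cst (dSc (L 0))) (ldv (Bp L n))))) m x"
      unfolding lhs ladd_apply lshift_apply lsub_apply dsB
      using lmul_cst[OF ubldvB, of "dSc (L 0)" "m-1" x] R[of x]
      by (auto simp: B_def Bp_def Ln_def dS_apply)
  qed
qed



lemma toK_lsub': "ubd F \<Longrightarrow> ubd G \<Longrightarrow> toK u (lsub F G) = lsub (toK u F) (toK u G)"
  using toK_lsub ubd_def by metis
lemma toK_lmul': "ubd F \<Longrightarrow> ubd G \<Longrightarrow> toK u (lmul F G) = lmul (toK u F) (toK u G)"
  using toK_lmul ubd_def by metis
lemma toK_ldv': "ubd F \<Longrightarrow> toK u (ldv F) = ldv (toK u F)"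
  using toK_ldv ubd_def by metis
lemma toK_lneg': assumes "ubd F" shows "toK u (lneg F) = lneg (toK u F)"
proof -
  obtain N where F: "ub N F" using assms ubd_def by blast
  show ?thesis
  proof (intro ext)
    fix m x show "toK u (lneg F) m x = lneg (toK u F) m x"
      unfolding lneg_apply toK_bridge[OF F order_refl] toK_bridge[OF ub_lneg[OF F] order_refl]
      by (simp add: sum_negf[symmetric])
  qed
qed
lemma toK_lzero: "toK u lzero = lzero"
proof -
  have "lzero = cst (\<lambda>_. 0)" by (auto simp: lzero_def cst_def)
  then show ?thesis using toK_cst by metis
qed

lemma toK_dT:
  assumes "ubd F" "dokS (eT k) (cT k) F" "dok (eT k) (cT k) u"
  shows "dT k (toK u F) = lsub (toK u (dT k F)) (lmul (cst (dTc k u)) (ldv (toK u F)))"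
proof -
  obtain N where N: "ub N F" using assms(1) ubd_def by blast
  show ?thesis unfolding dT_DS dTc_Dl
    by (rule toK_DS[where e="eT k" and c="cT k"]) (use line_T N assms in auto)
qed
lemma toK_dS:
  assumes "ubd F" "dokS eS cS F" "dok eS cS u"
  shows "dS (toK u F) = lsub (toK u (dS F)) (lmul (cst (dSc u)) (ldv (toK u F)))"
proof -
  obtain N where N: "ub N F" using assms(1) ubd_def by blast
  show ?thesis unfolding dS_DS dSc_Dl
    by (rule toK_DS[where e="eS" and c="cS"]) (use line_S N assms in auto)
qed

lemmas push = toK_lsub' toK_lmul' toK_ldv' toK_lneg' toK_cst toK_lzero toK_lone

lemma KB:
  assumes uA: "ubd A" and uB: "ubd B" and dA: "dokS (eT 1) (cT 1) A" and dB: "dokS (eT 1) (cT 1) B"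
    and du: "dok (eT 1) (cT 1) u"
  shows "kBr (toK u A) (toK u B) = toK u (lsub (lmul (ldv A) (dT 1 B)) (lmul (dT 1 A) (ldv B)))"
proof -
  have "kBr (toK u A) (toK u B) = lsub (lmul (ldv (toK u A)) (lsub (toK u (dT 1 B)) (lmul (cst (dTc 1 u)) (ldv (toK u B)))))
      (lmul (lsub (toK u (dT 1 A)) (lmul (cst (dTc 1 u)) (ldv (toK u A)))) (ldv (toK u B)))"
    unfolding kBr_def toK_dT[OF uA dA du] toK_dT[OF uB dB du] ..
  also have "\<dots> = lsub (lmul (ldv (toK u A)) (toK u (dT 1 B))) (lmul (toK u (dT 1 A)) (ldv (toK u B)))"
    by (rule phi_inj) (simp_all add: uA uB algebra_simps)
  also have "\<dots> = toK u (lsub (lmul (ldv A) (dT 1 B)) (lmul (dT 1 A) (ldv B)))"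
    by (simp add: push uA uB)
  finally show ?thesis .
qed



theorem mainTheorem6:
  fixes L Lbinv :: lser
  assumes L_lead: "L 1 = (\<lambda>_. 1)"
    and L_top: "\<forall>m>1. L m = (\<lambda>_. 0)"
    and Lbinv_bot: "\<forall>m< -1. Lbinv m = (\<lambda>_. 0)"
    and ubar0_nz: "\<forall>x. Lbinv (-1) x \<noteq> 0"
    and smooth: "\<forall>m. sep_diff (L m) \<and> sep_diff (Lbinv m)"
    and L_t: "\<forall>n\<ge>1. dT n L = todaBr (Bp L n) L"
    and L_tb: "\<forall>n\<ge>1. dTb n L = todaBr (Bbar Lbinv n) L"
    and Lbinv_t: "\<forall>n\<ge>1. dT n Lbinv = todaBr (Bp L n) Lbinv"
    and Lbinv_tb: "\<forall>n\<ge>1. dTb n Lbinv = todaBr (Bbar Lbinv n) Lbinv"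
  shows "\<forall>n\<ge>1.
           dT n (Lk L) = kBr (Bk L n) (Lk L)
         \<and> lmul (dS (Lk L)) (Pk L) = kBr (Pk L) (Lk L)
         \<and> lmul (lneg (dS (Bk L n))) (Pk L) = lsub (lneg (dT n (Pk L))) (kBr (Pk L) (Bk L n))"
proof (intro allI impI)
  fix n :: nat assume n: "1 \<le> n"
  define u where "u = L 0"
  have ubL: "ub 1 L" using L_top by (simp add: ub_def)
  have uL: "ubd L" using ubL ubdI by blast
  have dT1L: "dokS (eT 1) (cT 1) L" using smooth sep_dok_T by (simp add: dokS_def)
  have dTnL: "dokS (eT n) (cT n) L" using smooth sep_dok_T n by (simp add: dokS_def)
  have dSL: "dokS eS cS L" using smooth sep_dok_S by (simp add: dokS_def)
  have du1: "dok (eT 1) (cT 1) u" using dT1L by (simp add: dokS_def u_def)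
  have dun: "dok (eT n) (cT n) u" using dTnL by (simp add: dokS_def u_def)
  have dus: "dok eS cS u" using dSL by (simp add: dokS_def u_def)
  have Lt1: "dT 1 L = todaBr (Bp L 1) L" using L_t by simp
  have Ltn: "dT n L = todaBr (Bp L n) L" using L_t n by simp
  note PW = pworld[OF ubL L_lead dT1L dSL Lt1 Ltn]
  have P1: "dT 1 L = lshift (lsub (dS L) (lmul (cst (dSc u)) (ldv L)))" using PW(1) by (simp add: u_def)
  have ZC: "dT 1 (Bp L n) = ladd (cst (dTc n u))
            (lshift (lsub (dS (Bp L n)) (lmul (cst (dSc u)) (ldv (Bp L n)))))" using PW(2) by (simp add: u_def)
  have ubB: "ub (int n) (Bp L n)" unfolding Bp_def using ub_lpos[OF ub_lpow[OF ubL]] by simp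
  have uB: "ubd (Bp L n)" using ubB ubdI by blast
  have dB1: "dokS (eT 1) (cT 1) (Bp L n)"
    unfolding Bp_def using DS_lpow[OF line_T ubL dT1L] dokS_lpos by blast
  have dBs: "dokS eS cS (Bp L n)"
    unfolding Bp_def using DS_lpow[OF line_S ubL dSL] dokS_lpos by blast
  define P where "P = lshift lone"
  have uP: "ubd P" by (simp add: P_def)
  have dP: "dokS e c P" for e c by (simp add: dokS_def P_def lone_def)
  have ldvP: "ldv P = lone" by (auto simp: P_def lone_def intro!: ext)
  have dTP: "dT k P = lzero" for k by (auto simp: P_def lone_def lzero_def dT_def intro!: ext)
  have LkE: "Lk L = toK u L" by (simp add: Lk_def u_def)
  have BkE: "Bk L n = toK u (Bp L n)"
    unfolding Bk_def LkE Bp_def toK_lpow[OF ubL, symmetric]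
    using toK_lpos[OF ub_lpow[OF ubL]] by simp
  have PkE: "Pk L = toK u P" by (simp add: toK_P P_def u_def)
  show "dT n (Lk L) = kBr (Bk L n) (Lk L)
         \<and> lmul (dS (Lk L)) (Pk L) = kBr (Pk L) (Lk L)
         \<and> lmul (lneg (dS (Bk L n))) (Pk L) = lsub (lneg (dT n (Pk L))) (kBr (Pk L) (Bk L n))"
    unfolding LkE BkE PkE
  proof (intro conjI)
    have PW1: "lsub (dT n L) (lmul (cst (dTc n u)) (ldv L)) = lsub (lmul (ldv (Bp L n)) (dT 1 L)) (lmul (dT 1 (Bp L n)) (ldv L))"
      unfolding Ltn P1 ZC todaBr_def
      by (rule phi_inj) (simp_all add: uL uB algebra_simps)
    have "dT n (toK u L) = lsub (toK u (dT n L)) (lmul (cst (dTc n u)) (ldv (toK u L)))"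
      by (rule toK_dT[OF uL dTnL dun])
    also have "\<dots> = toK u (lsub (dT n L) (lmul (cst (dTc n u)) (ldv L)))"
      by (simp add: push uL)
    also have "\<dots> = toK u (lsub (lmul (ldv (Bp L n)) (dT 1 L)) (lmul (dT 1 (Bp L n)) (ldv L)))"
      unfolding PW1 ..
    also have "\<dots> = kBr (toK u (Bp L n)) (toK u L)"
      by (rule KB[symmetric, OF uB uL dB1 dT1L du1])
    finally show "dT n (toK u L) = kBr (toK u (Bp L n)) (toK u L)" .
  next
    have PW2: "lmul (lsub (dS L) (lmul (cst (dSc u)) (ldv L))) P = lsub (lmul (ldv P) (dT 1 L)) (lmul (dT 1 P) (ldv L))"
      unfolding ldvP dTP P1
      by (rule phi_inj) (simp_all add: uL uP P_def algebra_simps)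
    have "lmul (dS (toK u L)) (toK u P) = lmul (lsub (toK u (dS L)) (lmul (cst (dSc u)) (ldv (toK u L)))) (toK u P)"
      unfolding toK_dS[OF uL dSL dus] ..
    also have "\<dots> = toK u (lmul (lsub (dS L) (lmul (cst (dSc u)) (ldv L))) P)"
      by (simp add: push uL uP)
    also have "\<dots> = toK u (lsub (lmul (ldv P) (dT 1 L)) (lmul (dT 1 P) (ldv L)))"
      unfolding PW2 ..
    also have "\<dots> = kBr (toK u P) (toK u L)"
      by (rule KB[symmetric, OF uP uL dP dT1L du1])
    finally show "lmul (dS (toK u L)) (toK u P) = kBr (toK u P) (toK u L)" .
  next
    have PW3: "lmul (lneg (lsub (dS (Bp L n)) (lmul (cst (dSc u)) (ldv (Bp L n))))) P =
        lsub (lneg (lsub (dT n P) (lmul (cst (dTc n u)) (ldv P))))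
          (lsub (lmul (ldv P) (dT 1 (Bp L n))) (lmul (dT 1 P) (ldv (Bp L n))))"
      unfolding ldvP dTP ZC
      by (rule phi_inj) (simp_all add: uB uP P_def algebra_simps)
    have "lmul (lneg (dS (toK u (Bp L n)))) (toK u P) =
        lmul (lneg (lsub (toK u (dS (Bp L n))) (lmul (cst (dSc u)) (ldv (toK u (Bp L n)))))) (toK u P)"
      unfolding toK_dS[OF uB dBs dus] ..
    also have "\<dots> = toK u (lmul (lneg (lsub (dS (Bp L n)) (lmul (cst (dSc u)) (ldv (Bp L n))))) P)"
      by (simp add: push uB uP)
    also have "\<dots> = toK u (lsub (lneg (lsub (dT n P) (lmul (cst (dTc n u)) (ldv P))))
          (lsub (lmul (ldv P) (dT 1 (Bp L n))) (lmul (dT 1 P) (ldv (Bp L n)))))"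
      unfolding PW3 ..
    also have "\<dots> = lsub (lneg (lsub (toK u (dT n P)) (lmul (cst (dTc n u)) (ldv (toK u P)))))
          (toK u (lsub (lmul (ldv P) (dT 1 (Bp L n))) (lmul (dT 1 P) (ldv (Bp L n)))))"
      by (simp add: push uB uP)
    also have "\<dots> = lsub (lneg (dT n (toK u P))) (kBr (toK u P) (toK u (Bp L n)))"
      unfolding toK_dT[OF uP dP dun] KB[OF uP uB dP dB1 du1] ..
    finally show "lmul (lneg (dS (toK u (Bp L n)))) (toK u P) =
        lsub (lneg (dT n (toK u P))) (kBr (toK u P) (toK u (Bp L n)))" .
  qed
qed

end
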